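(* For all finite multisets of formulas $\Gamma,\Delta$: $\vdash_{\mathsf{GT}^-}\Gamma\Rightarrow\Delta$ if and only if $\vdash_{\mathsf{GT}'^-}\Gamma\Rightarrow\Delta$.
   Context: Fix a countably infinite set $\mathsf{Prop}$ of propositional variables. Classical formulas are generated by $\alpha ::= p \mid \bot \mid \neg\alpha \mid \alpha\wedge\alpha \mid \alpha\vee\alpha$ with $p\in\mathsf{Prop}$. Formulas are generated by $\phi ::= \alpha \mid \phi\wedge\phi \mid \phi\vee\phi \mid \phi\mathbin{\backslash\!\!/}\phi$ where $\alpha$ is classical ($\vee$: split disjunction, $\mathbin{\backslash\!\!/}$: inquisitive disjunction). A sequent is $\Gamma\Rightarrow\Delta$ with $\Gamma,\Delta$ finite multisets of formulas; "$\Gamma,\Delta$" is multiset union. Deep-inference notation: for a formula $\chi$ with a designated occurrence of a subformula not in the scope of any negation, $\chi\{\eta\}$ denotes the result of replacing that occurrence by $\eta$. The cut-free calculus $\mathsf{GT}^-$ ($\alpha$ ranges over classical formulas, $\Lambda$ over multisets of classical formulas): axioms $\Gamma,p\Rightarrow p,\Delta$ and $\Gamma,\bot\Rightarrow\Delta$; (L$\neg$) from $\Gamma\Rightarrow\alpha,\Delta$ infer $\Gamma,\neg\alpha\Rightarrow\Delta$; (R$\neg$) from $\Gamma,\alpha\Rightarrow\Delta$ infer $\Gamma\Rightarrow\neg\alpha,\Delta$; (L$\wedge$) from $\Gamma,\phi,\psi\Rightarrow\Delta$ infer $\Gamma,\phi\wedge\psi\Rightarrow\Delta$; (R$\wedge$)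 from $\Gamma\Rightarrow\phi,\Lambda$ and $\Gamma\Rightarrow\psi,\Lambda$ infer $\Gamma\Rightarrow\phi\wedge\psi,\Lambda,\Delta$; (L$\vee$) from $\Gamma,\phi\Rightarrow\Lambda$ and $\Gamma,\psi\Rightarrow\Lambda$ infer $\Gamma,\phi\vee\psi\Rightarrow\Lambda,\Delta$; (R$\vee$) from $\Gamma\Rightarrow\phi,\psi,\Delta$ infer $\Gamma\Rightarrow\phi\vee\psi,\Delta$; (L$\mathbin{\backslash\!\!/}$) from $\Gamma,\chi\{\phi_L\}\Rightarrow\Delta$ and $\Gamma,\chi\{\phi_R\}\Rightarrow\Delta$ infer $\Gamma,\chi\{\phi_L\mathbin{\backslash\!\!/}\phi_R\}\Rightarrow\Delta$; (R$\mathbin{\backslash\!\!/}$) from $\Gamma\Rightarrow\chi\{\phi_i\},\Delta$ ($i\in\{L,R\}$) infer $\Gamma\Rightarrow\chi\{\phi_L\mathbin{\backslash\!\!/}\phi_R\},\Delta$. The calculus $\mathsf{GT}'^-$ has the same axioms and rules as $\mathsf{GT}^-$ except that (R$\wedge$) and (L$\vee$) are replaced by: (L$\vee'$) from $\Gamma_1,\phi\Rightarrow\Delta_1$ and $\Gamma_2,\psi\Rightarrow\Delta_2$ infer $\Gamma_1,\Gamma_2,\phi\vee\psi\Rightarrow\Delta_1,\Delta_2$; (R$\wedge'$) from $\Gamma_1\Rightarrow\phi,\Delta_1$ and $\Gamma_2\Rightarrow\psi,\Delta_2$ infer $\Gamma_1,\Gamma_2\Rightarrow\phi\wedge\psi,\Delta_1,\Delta_2$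 (all formulas and multisets arbitrary); and the structural rules (LC) from $\Gamma,\phi,\phi\Rightarrow\Delta$ infer $\Gamma,\phi\Rightarrow\Delta$ ($\phi$ arbitrary), and (RC) from $\Gamma\Rightarrow\alpha,\alpha,\Delta$ infer $\Gamma\Rightarrow\alpha,\Delta$ ($\alpha$ classical) are added. Neither calculus contains a cut rule. *)

theory Defs
  imports Main "HOL-Library.Multiset"
begin

text \<open>Propositional variables: the countably infinite set nat.
  IDisj is the inquisitive disjunction, Disj the split (classical) disjunction.\<close>

datatype fm = Atom nat | Bot | Neg fm | Conj fm fm | Disj fm fm | IDisj fm fm

fun classical :: "fm \<Rightarrow> bool" where
  "classical (Atom p) = True"
| "classical Bot = True"
| "classical (Neg a) = classical a"
| "classical (Conj a b) = (classical a \<and> classical b)"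
| "classical (Disj a b) = (classical a \<and> classical b)"
| "classical (IDisj a b) = False"

fun wf_fm :: "fm \<Rightarrow> bool" where
  "wf_fm (Atom p) = True"
| "wf_fm Bot = True"
| "wf_fm (Neg a) = classical a"
| "wf_fm (Conj a b) = (wf_fm a \<and> wf_fm b)"
| "wf_fm (Disj a b) = (wf_fm a \<and> wf_fm b)"
| "wf_fm (IDisj a b) = (wf_fm a \<and> wf_fm b)"

text \<open>Deep-inference contexts: a designated hole not in the scope of any negation.\<close>
datatype ctx = Hole
  | CConjL ctx fm | CConjR fm ctx
  | CDisjL ctx fm | CDisjR fm ctx
  | CIDisjL ctx fm | CIDisjR fm ctx

fun fill :: "ctx \<Rightarrow> fm \<Rightarrow> fm" where
  "fill Hole e = e"
| "fill (CConjL c b) e = Conj (fill c e) b"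
| "fill (CConjR a c) e = Conj a (fill c e)"
| "fill (CDisjL c b) e = Disj (fill c e) b"
| "fill (CDisjR a c) e = Disj a (fill c e)"
| "fill (CIDisjL c b) e = IDisj (fill c e) b"
| "fill (CIDisjR a c) e = IDisj a (fill c e)"

inductive GT :: "fm multiset \<Rightarrow> fm multiset \<Rightarrow> bool" where
  ax_atom: "GT (add_mset (Atom p) \<Gamma>) (add_mset (Atom p) \<Delta>)"
| ax_bot: "GT (add_mset Bot \<Gamma>) \<Delta>"
| L_neg: "classical a \<Longrightarrow> GT \<Gamma> (add_mset a \<Delta>) \<Longrightarrow> GT (add_mset (Neg a) \<Gamma>) \<Delta>"
| R_neg: "classical a \<Longrightarrow> GT (add_mset a \<Gamma>) \<Delta> \<Longrightarrow> GT \<Gamma> (add_mset (Neg a) \<Delta>)"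
| L_conj: "GT (add_mset \<phi> (add_mset \<psi> \<Gamma>)) \<Delta> \<Longrightarrow> GT (add_mset (Conj \<phi> \<psi>) \<Gamma>) \<Delta>"
| R_conj: "\<forall>x\<in>#\<Lambda>. classical x \<Longrightarrow> GT \<Gamma> (add_mset \<phi> \<Lambda>) \<Longrightarrow> GT \<Gamma> (add_mset \<psi> \<Lambda>)
    \<Longrightarrow> GT \<Gamma> (add_mset (Conj \<phi> \<psi>) (\<Lambda> + \<Delta>))"
| L_disj: "\<forall>x\<in>#\<Lambda>. classical x \<Longrightarrow> GT (add_mset \<phi> \<Gamma>) \<Lambda> \<Longrightarrow> GT (add_mset \<psi> \<Gamma>) \<Lambda>
    \<Longrightarrow> GT (add_mset (Disj \<phi> \<psi>) \<Gamma>) (\<Lambda> + \<Delta>)"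
| R_disj: "GT \<Gamma> (add_mset \<phi> (add_mset \<psi> \<Delta>)) \<Longrightarrow> GT \<Gamma> (add_mset (Disj \<phi> \<psi>) \<Delta>)"
| L_idisj: "GT (add_mset (fill \<chi> \<phi>) \<Gamma>) \<Delta> \<Longrightarrow> GT (add_mset (fill \<chi> \<psi>) \<Gamma>) \<Delta>
    \<Longrightarrow> GT (add_mset (fill \<chi> (IDisj \<phi> \<psi>)) \<Gamma>) \<Delta>"
| R_idisjL: "GT \<Gamma> (add_mset (fill \<chi> \<phi>) \<Delta>) \<Longrightarrow> GT \<Gamma> (add_mset (fill \<chi> (IDisj \<phi> \<psi>)) \<Delta>)"
| R_idisjR: "GT \<Gamma> (add_mset (fill \<chi> \<psi>) \<Delta>) \<Longrightarrow> GT \<Gamma> (add_mset (fill \<chi> (IDisj \<phi> \<psi>)) \<Delta>)"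

inductive GT' :: "fm multiset \<Rightarrow> fm multiset \<Rightarrow> bool" where
  ax_atom: "GT' (add_mset (Atom p) \<Gamma>) (add_mset (Atom p) \<Delta>)"
| ax_bot: "GT' (add_mset Bot \<Gamma>) \<Delta>"
| L_neg: "classical a \<Longrightarrow> GT' \<Gamma> (add_mset a \<Delta>) \<Longrightarrow> GT' (add_mset (Neg a) \<Gamma>) \<Delta>"
| R_neg: "classical a \<Longrightarrow> GT' (add_mset a \<Gamma>) \<Delta> \<Longrightarrow> GT' \<Gamma> (add_mset (Neg a) \<Delta>)"
| L_conj: "GT' (add_mset \<phi> (add_mset \<psi> \<Gamma>)) \<Delta> \<Longrightarrow> GT' (add_mset (Conj \<phi> \<psi>) \<Gamma>) \<Delta>"
| R_conj': "GT' \<Gamma>1 (add_mset \<phi> \<Delta>1) \<Longrightarrow> GT' \<Gamma>2 (add_mset \<psi> \<Delta>2)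
    \<Longrightarrow> GT' (\<Gamma>1 + \<Gamma>2) (add_mset (Conj \<phi> \<psi>) (\<Delta>1 + \<Delta>2))"
| L_disj': "GT' (add_mset \<phi> \<Gamma>1) \<Delta>1 \<Longrightarrow> GT' (add_mset \<psi> \<Gamma>2) \<Delta>2
    \<Longrightarrow> GT' (add_mset (Disj \<phi> \<psi>) (\<Gamma>1 + \<Gamma>2)) (\<Delta>1 + \<Delta>2)"
| R_disj: "GT' \<Gamma> (add_mset \<phi> (add_mset \<psi> \<Delta>)) \<Longrightarrow> GT' \<Gamma> (add_mset (Disj \<phi> \<psi>) \<Delta>)"
| L_idisj: "GT' (add_mset (fill \<chi> \<phi>) \<Gamma>) \<Delta> \<Longrightarrow> GT' (add_mset (fill \<chi> \<psi>) \<Gamma>) \<Delta>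
    \<Longrightarrow> GT' (add_mset (fill \<chi> (IDisj \<phi> \<psi>)) \<Gamma>) \<Delta>"
| R_idisjL: "GT' \<Gamma> (add_mset (fill \<chi> \<phi>) \<Delta>) \<Longrightarrow> GT' \<Gamma> (add_mset (fill \<chi> (IDisj \<phi> \<psi>)) \<Delta>)"
| R_idisjR: "GT' \<Gamma> (add_mset (fill \<chi> \<psi>) \<Delta>) \<Longrightarrow> GT' \<Gamma> (add_mset (fill \<chi> (IDisj \<phi> \<psi>)) \<Delta>)"
| LC: "GT' (add_mset \<phi> (add_mset \<phi> \<Gamma>)) \<Delta> \<Longrightarrow> GT' (add_mset \<phi> \<Gamma>) \<Delta>"
| RC: "classical a \<Longrightarrow> GT' \<Gamma> (add_mset a (add_mset a \<Delta>)) \<Longrightarrow> GT' \<Gamma> (add_mset a \<Delta>)"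

end

theory Submission
  imports Defs
begin

section \<open>Part A: GT implies GT'\<close>

lemma GT'_weak: "GT' \<Gamma> \<Delta> \<Longrightarrow> GT' (\<Gamma> + A) (\<Delta> + B)"
proof (induction arbitrary: A B rule: GT'.induct)
  case (ax_atom p \<Gamma> \<Delta>)
  then show ?case using GT'.ax_atom by simp
next
  case (ax_bot \<Gamma> \<Delta>)
  then show ?case using GT'.ax_bot by simp
next
  case (L_neg a \<Gamma> \<Delta>)
  then show ?case using GT'.L_neg by fastforce
next
  case (R_neg a \<Gamma> \<Delta>)
  then show ?case using GT'.R_neg by fastforce
next
  case (L_conj \<phi> \<psi> \<Gamma> \<Delta>)
  then show ?case using GT'.L_conj by fastforce
next
  case (R_conj' \<Gamma>1 \<phi> \<Delta>1 \<Gamma>2 \<psi> \<Delta>2)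
  have h1: "GT' (\<Gamma>1 + A) (add_mset \<phi> (\<Delta>1 + B))" using R_conj'.IH(1)[of A B] by simp
  have h2: "GT' \<Gamma>2 (add_mset \<psi> \<Delta>2)" using R_conj'.hyps(2) .
  from GT'.R_conj'[OF h1 h2] show ?case by (simp add: ac_simps)
next
  case (L_disj' \<phi> \<Gamma>1 \<Delta>1 \<psi> \<Gamma>2 \<Delta>2)
  have h1: "GT' (add_mset \<phi> (\<Gamma>1 + A)) (\<Delta>1 + B)" using L_disj'.IH(1)[of A B] by simp
  have h2: "GT' (add_mset \<psi> \<Gamma>2) \<Delta>2" using L_disj'.hyps(2) .
  from GT'.L_disj'[OF h1 h2] show ?case by (simp add: ac_simps)
next
  case (R_disj \<Gamma> \<phi> \<psi> \<Delta>)
  then show ?case using GT'.R_disj by fastforce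
next
  case (L_idisj \<chi> \<phi> \<Gamma> \<Delta> \<psi>)
  then show ?case using GT'.L_idisj by fastforce
next
  case (R_idisjL \<Gamma> \<chi> \<phi> \<Delta> \<psi>)
  then show ?case using GT'.R_idisjL by fastforce
next
  case (R_idisjR \<Gamma> \<chi> \<psi> \<Delta> \<phi>)
  then show ?case using GT'.R_idisjR by fastforce
next
  case (LC \<phi> \<Gamma> \<Delta>)
  then show ?case using GT'.LC by fastforce
next
  case (RC a \<Gamma> \<Delta>)
  then show ?case using GT'.RC by fastforce
qed

lemma GT'_LCm: "GT' (\<Gamma> + \<Gamma> + \<Sigma>) \<Delta> \<Longrightarrow> GT' (\<Gamma> + \<Sigma>) \<Delta>"
proof (induction \<Gamma> arbitrary: \<Sigma>)
  case empty
  then show ?case by simp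
next
  case (add x \<Gamma>)
  have "GT' (add_mset x (add_mset x (\<Gamma> + \<Gamma> + \<Sigma>))) \<Delta>" using add.prems by (simp add: ac_simps)
  then have "GT' (add_mset x (\<Gamma> + \<Gamma> + \<Sigma>)) \<Delta>" by (rule GT'.LC)
  then have "GT' (\<Gamma> + \<Gamma> + add_mset x \<Sigma>) \<Delta>" by (simp add: ac_simps)
  then have "GT' (\<Gamma> + add_mset x \<Sigma>) \<Delta>" by (rule add.IH)
  then show ?case by (simp add: ac_simps)
qed

lemma GT'_RCm: "\<forall>x\<in>#\<Lambda>. classical x \<Longrightarrow> GT' \<Gamma> (\<Lambda> + \<Lambda> + \<Sigma>) \<Longrightarrow> GT' \<Gamma> (\<Lambda> + \<Sigma>)"
proof (induction \<Lambda> arbitrary: \<Sigma>)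
  case empty
  then show ?case by simp
next
  case (add x \<Lambda>)
  have "GT' \<Gamma> (add_mset x (add_mset x (\<Lambda> + \<Lambda> + \<Sigma>)))" using add.prems by (simp add: ac_simps)
  then have "GT' \<Gamma> (add_mset x (\<Lambda> + \<Lambda> + \<Sigma>))" using add.prems(1) GT'.RC[of x] by simp
  then have "GT' \<Gamma> (\<Lambda> + \<Lambda> + add_mset x \<Sigma>)" by (simp add: ac_simps)
  then have "GT' \<Gamma> (\<Lambda> + add_mset x \<Sigma>)" using add.IH[of "add_mset x \<Sigma>"] add.prems(1) by simp
  then show ?case by (simp add: ac_simps)
qed

lemma GT_GT': "GT \<Gamma> \<Delta> \<Longrightarrow> GT' \<Gamma> \<Delta>"
proof (induction rule: GT.induct)
  case (ax_atom p \<Gamma> \<Delta>)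
  show ?case by (rule GT'.ax_atom)
next
  case (ax_bot \<Gamma> \<Delta>)
  show ?case by (rule GT'.ax_bot)
next
  case (L_neg a \<Gamma> \<Delta>)
  show ?case by (rule GT'.L_neg[OF L_neg.hyps(1) L_neg.IH])
next
  case (R_neg a \<Gamma> \<Delta>)
  show ?case by (rule GT'.R_neg[OF R_neg.hyps(1) R_neg.IH])
next
  case (L_conj \<phi> \<psi> \<Gamma> \<Delta>)
  show ?case using L_conj.IH by (rule GT'.L_conj)
next
  case (R_conj \<Lambda> \<Gamma> \<phi> \<psi> \<Delta>)
  from GT'.R_conj'[OF R_conj.IH(1) R_conj.IH(2)]
  have "GT' (\<Gamma> + \<Gamma> + {#}) (\<Lambda> + \<Lambda> + {#Conj \<phi> \<psi>#})" by (simp add: ac_simps)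
  then have "GT' (\<Gamma> + {#}) (\<Lambda> + \<Lambda> + {#Conj \<phi> \<psi>#})" by (rule GT'_LCm)
  then have "GT' \<Gamma> (\<Lambda> + {#Conj \<phi> \<psi>#})" using GT'_RCm[OF R_conj.hyps(1), of \<Gamma> "{#Conj \<phi> \<psi>#}"] by simp
  then have "GT' (\<Gamma> + {#}) (\<Lambda> + {#Conj \<phi> \<psi>#} + \<Delta>)" by (rule GT'_weak)
  then show ?case by (simp add: ac_simps)
next
  case (L_disj \<Lambda> \<phi> \<Gamma> \<psi> \<Delta>)
  from GT'.L_disj'[OF L_disj.IH(1) L_disj.IH(2)]
  have "GT' (\<Gamma> + \<Gamma> + {#Disj \<phi> \<psi>#}) (\<Lambda> + \<Lambda> + {#})" by (simp add: ac_simps)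
  then have "GT' (\<Gamma> + {#Disj \<phi> \<psi>#}) (\<Lambda> + \<Lambda> + {#})" by (rule GT'_LCm)
  then have "GT' (\<Gamma> + {#Disj \<phi> \<psi>#}) (\<Lambda> + {#})" using GT'_RCm L_disj.hyps(1) by blast
  then have "GT' (\<Gamma> + {#Disj \<phi> \<psi>#} + {#}) (\<Lambda> + {#} + \<Delta>)" by (rule GT'_weak)
  then show ?case by (simp add: ac_simps)
next
  case (R_disj \<Gamma> \<phi> \<psi> \<Delta>)
  show ?case using R_disj.IH by (rule GT'.R_disj)
next
  case (L_idisj \<chi> \<phi> \<Gamma> \<Delta> \<psi>)
  show ?case using L_idisj.IH by (rule GT'.L_idisj)
next
  case (R_idisjL \<Gamma> \<chi> \<phi> \<Delta> \<psi>)
  show ?case using R_idisjL.IH by (rule GT'.R_idisjL)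
next
  case (R_idisjR \<Gamma> \<chi> \<psi> \<Delta> \<phi>)
  show ?case using R_idisjR.IH by (rule GT'.R_idisjR)
qed


section \<open>Semantics and resolutions\<close>

fun ev :: "(nat \<Rightarrow> bool) \<Rightarrow> fm \<Rightarrow> bool" where
  "ev v (Atom p) = v p"
| "ev v Bot = False"
| "ev v (Neg a) = (\<not> ev v a)"
| "ev v (Conj a b) = (ev v a \<and> ev v b)"
| "ev v (Disj a b) = (ev v a \<or> ev v b)"
| "ev v (IDisj a b) = (ev v a \<or> ev v b)"

fun Res :: "fm \<Rightarrow> fm set" where
  "Res (Atom p) = {Atom p}"
| "Res Bot = {Bot}"
| "Res (Neg a) = {Neg a}"
| "Res (Conj a b) = {Conj x y | x y. x \<in> Res a \<and> y \<in> Res b}"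
| "Res (Disj a b) = {Disj x y | x y. x \<in> Res a \<and> y \<in> Res b}"
| "Res (IDisj a b) = Res a \<union> Res b"

definition RR :: "fm \<Rightarrow> fm \<Rightarrow> bool" where "RR x r = (r \<in> Res x)"

definition CV :: "fm multiset \<Rightarrow> fm multiset \<Rightarrow> bool" where
  "CV X Y = (\<forall>v. (\<forall>x\<in>#X. ev v x) \<longrightarrow> (\<exists>y\<in>#Y. ev v y))"

definition Sem :: "fm multiset \<Rightarrow> fm multiset \<Rightarrow> bool" where
  "Sem \<Gamma> \<Delta> = (\<forall>X. rel_mset RR \<Gamma> X \<longrightarrow> (\<exists>Y. rel_mset RR \<Delta> Y \<and> CV X Y))"

lemma Res_classical: "classical a \<Longrightarrow> Res a = {a}"
  by (induction a) auto

lemma Res_wf: "wf_fm x \<Longrightarrow> r \<in> Res x \<Longrightarrow> classical r"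
  by (induction x arbitrary: r) auto

lemma Res_ne: "\<exists>r. r \<in> Res x"
  by (induction x) auto

lemma Res_fill: "Res (fill \<chi> (IDisj \<phi> \<psi>)) = Res (fill \<chi> \<phi>) \<union> Res (fill \<chi> \<psi>)"
  by (induction \<chi>) (simp_all, blast+)

lemma rel_exists: "\<exists>Y. rel_mset RR M Y"
proof (induction M)
  case empty
  have "rel_mset RR {#} {#}" by (rule rel_mset_Zero)
  then show ?case by blast
next
  case (add x M)
  then obtain Y where "rel_mset RR M Y" by blast
  moreover obtain r where "RR x r" using Res_ne unfolding RR_def by blast
  ultimately have "rel_mset RR (add_mset x M) (add_mset r Y)" by (intro rel_mset_Plus)
  then show ?case by blast
qed

lemma rel_plus: "rel_mset R M1 N1 \<Longrightarrow> rel_mset R M2 N2 \<Longrightarrow> rel_mset R (M1 + M2) (N1 + N2)"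
  by (induction rule: rel_mset_induct) (auto intro: rel_mset_Plus)

lemma rel_split: "rel_mset R (M1 + M2) N \<Longrightarrow> \<exists>N1 N2. N = N1 + N2 \<and> rel_mset R M1 N1 \<and> rel_mset R M2 N2"
proof (induction M1 arbitrary: N)
  case empty
  then show ?case using rel_mset_Zero[of R] by (intro exI[of _ "{#}"] exI[of _ N]) simp
next
  case (add x M1)
  then obtain N' b where "N = add_mset b N'" "R x b" "rel_mset R (M1 + M2) N'"
    using msed_rel_invL[of R x "M1 + M2" N] by auto
  moreover obtain N1 N2 where "N' = N1 + N2" "rel_mset R M1 N1" "rel_mset R M2 N2" using add.IH calculation(3) by blast
  ultimately show ?case using rel_mset_Plus[of R x b M1 N1] by (intro exI[of _ "add_mset b N1"] exI[of _ N2]) auto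
qed

section \<open>Part B: GT' is sound for Sem\<close>

lemma relE: "rel_mset RR (add_mset a M) N \<Longrightarrow> (\<And>b N1. N = add_mset b N1 \<Longrightarrow> b \<in> Res a \<Longrightarrow> rel_mset RR M N1 \<Longrightarrow> P) \<Longrightarrow> P"
  using msed_rel_invL[of RR a M N] unfolding RR_def by blast

lemma relI: "b \<in> Res a \<Longrightarrow> rel_mset RR M N \<Longrightarrow> rel_mset RR (add_mset a M) (add_mset b N)"
  using rel_mset_Plus[of RR a b M N] unfolding RR_def by blast

lemma SemI: "(\<And>X. rel_mset RR \<Gamma> X \<Longrightarrow> \<exists>Y. rel_mset RR \<Delta> Y \<and> CV X Y) \<Longrightarrow> Sem \<Gamma> \<Delta>"
  unfolding Sem_def by blast

lemma SemD: "Sem \<Gamma> \<Delta> \<Longrightarrow> rel_mset RR \<Gamma> X \<Longrightarrow> \<exists>Y. rel_mset RR \<Delta> Y \<and> CV X Y"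
  unfolding Sem_def by blast

lemma S_ax_atom: "Sem (add_mset (Atom p) \<Gamma>) (add_mset (Atom p) \<Delta>)"
proof (rule SemI)
  fix X assume "rel_mset RR (add_mset (Atom p) \<Gamma>) X"
  then obtain X' where X: "X = add_mset (Atom p) X'" by (rule relE) simp
  obtain Y where "rel_mset RR \<Delta> Y" using rel_exists by blast
  then have "rel_mset RR (add_mset (Atom p) \<Delta>) (add_mset (Atom p) Y)" by (intro relI) simp_all
  moreover have "CV X (add_mset (Atom p) Y)" unfolding CV_def X by simp
  ultimately show "\<exists>Y. rel_mset RR (add_mset (Atom p) \<Delta>) Y \<and> CV X Y" by blast
qed

lemma S_ax_bot: "Sem (add_mset Bot \<Gamma>) \<Delta>"
proof (rule SemI)
  fix X assume "rel_mset RR (add_mset Bot \<Gamma>) X"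
  then obtain X' where X: "X = add_mset Bot X'" by (rule relE) simp
  obtain Y where "rel_mset RR \<Delta> Y" using rel_exists by blast
  moreover have "CV X Y" unfolding CV_def X by simp
  ultimately show "\<exists>Y. rel_mset RR \<Delta> Y \<and> CV X Y" by blast
qed

lemma S_L_neg: assumes "classical a" "Sem \<Gamma> (add_mset a \<Delta>)" shows "Sem (add_mset (Neg a) \<Gamma>) \<Delta>"
proof (rule SemI)
  fix X assume "rel_mset RR (add_mset (Neg a) \<Gamma>) X"
  then obtain X' where X: "X = add_mset (Neg a) X'" "rel_mset RR \<Gamma> X'" by (rule relE) simp
  then obtain Y where Y: "rel_mset RR (add_mset a \<Delta>) Y" "CV X' Y" using SemD[OF assms(2)] by blast
  from Y(1) obtain b Y' where Y': "Y = add_mset b Y'" "b \<in> Res a" "rel_mset RR \<Delta> Y'" by (rule relE)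
  have "b = a" using Y'(2) Res_classical[OF assms(1)] by simp
  have "CV X Y'" using Y(2) unfolding CV_def X Y'(1) \<open>b = a\<close> by auto
  then show "\<exists>Y. rel_mset RR \<Delta> Y \<and> CV X Y" using Y'(3) by blast
qed

lemma S_R_neg: assumes "classical a" "Sem (add_mset a \<Gamma>) \<Delta>" shows "Sem \<Gamma> (add_mset (Neg a) \<Delta>)"
proof (rule SemI)
  fix X assume X: "rel_mset RR \<Gamma> X"
  have "rel_mset RR (add_mset a \<Gamma>) (add_mset a X)"
    using X Res_classical[OF assms(1)] by (intro relI) simp_all
  then obtain Y where Y: "rel_mset RR \<Delta> Y" "CV (add_mset a X) Y" using SemD[OF assms(2)] by blast
  have "rel_mset RR (add_mset (Neg a) \<Delta>) (add_mset (Neg a) Y)" using Y(1) by (intro relI) simp_all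
  moreover have "CV X (add_mset (Neg a) Y)" using Y(2) unfolding CV_def by auto
  ultimately show "\<exists>Y. rel_mset RR (add_mset (Neg a) \<Delta>) Y \<and> CV X Y" by blast
qed

lemma S_L_conj: assumes "Sem (add_mset \<phi> (add_mset \<psi> \<Gamma>)) \<Delta>" shows "Sem (add_mset (Conj \<phi> \<psi>) \<Gamma>) \<Delta>"
proof (rule SemI)
  fix X assume "rel_mset RR (add_mset (Conj \<phi> \<psi>) \<Gamma>) X"
  then obtain b X' where X: "X = add_mset b X'" "b \<in> Res (Conj \<phi> \<psi>)" "rel_mset RR \<Gamma> X'" by (rule relE)
  then obtain r1 r2 where b: "b = Conj r1 r2" "r1 \<in> Res \<phi>" "r2 \<in> Res \<psi>" by auto
  have "rel_mset RR (add_mset \<phi> (add_mset \<psi> \<Gamma>)) (add_mset r1 (add_mset r2 X'))"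
    using b X(3) by (intro relI) simp_all
  then obtain Y where "rel_mset RR \<Delta> Y" "CV (add_mset r1 (add_mset r2 X')) Y" using SemD[OF assms] by blast
  then show "\<exists>Y. rel_mset RR \<Delta> Y \<and> CV X Y" unfolding CV_def X b by auto
qed

lemma S_R_conj': assumes "Sem \<Gamma>1 (add_mset \<phi> \<Delta>1)" "Sem \<Gamma>2 (add_mset \<psi> \<Delta>2)"
  shows "Sem (\<Gamma>1 + \<Gamma>2) (add_mset (Conj \<phi> \<psi>) (\<Delta>1 + \<Delta>2))"
proof (rule SemI)
  fix X assume "rel_mset RR (\<Gamma>1 + \<Gamma>2) X"
  then obtain X1 X2 where X: "X = X1 + X2" "rel_mset RR \<Gamma>1 X1" "rel_mset RR \<Gamma>2 X2"
    using rel_split by blast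
  obtain Y1 where Y1: "rel_mset RR (add_mset \<phi> \<Delta>1) Y1" "CV X1 Y1" using SemD[OF assms(1) X(2)] by blast
  obtain Y2 where Y2: "rel_mset RR (add_mset \<psi> \<Delta>2) Y2" "CV X2 Y2" using SemD[OF assms(2) X(3)] by blast
  from Y1(1) obtain r1 Z1 where Z1: "Y1 = add_mset r1 Z1" "r1 \<in> Res \<phi>" "rel_mset RR \<Delta>1 Z1" by (rule relE)
  from Y2(1) obtain r2 Z2 where Z2: "Y2 = add_mset r2 Z2" "r2 \<in> Res \<psi>" "rel_mset RR \<Delta>2 Z2" by (rule relE)
  have "rel_mset RR (add_mset (Conj \<phi> \<psi>) (\<Delta>1 + \<Delta>2)) (add_mset (Conj r1 r2) (Z1 + Z2))"
    using Z1(2) Z2(2) rel_plus[OF Z1(3) Z2(3)] by (intro relI) auto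
  moreover have "CV X (add_mset (Conj r1 r2) (Z1 + Z2))"
    using Y1(2) Y2(2) unfolding CV_def X Z1 Z2 by auto
  ultimately show "\<exists>Y. rel_mset RR (add_mset (Conj \<phi> \<psi>) (\<Delta>1 + \<Delta>2)) Y \<and> CV X Y" by blast
qed

lemma S_L_disj': assumes "Sem (add_mset \<phi> \<Gamma>1) \<Delta>1" "Sem (add_mset \<psi> \<Gamma>2) \<Delta>2"
  shows "Sem (add_mset (Disj \<phi> \<psi>) (\<Gamma>1 + \<Gamma>2)) (\<Delta>1 + \<Delta>2)"
proof (rule SemI)
  fix X assume "rel_mset RR (add_mset (Disj \<phi> \<psi>) (\<Gamma>1 + \<Gamma>2)) X"
  then obtain b X' where X: "X = add_mset b X'" "b \<in> Res (Disj \<phi> \<psi>)" "rel_mset RR (\<Gamma>1 + \<Gamma>2) X'" by (rule relE)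
  then obtain r1 r2 where b: "b = Disj r1 r2" "r1 \<in> Res \<phi>" "r2 \<in> Res \<psi>" by auto
  from X(3) obtain X1 X2 where X': "X' = X1 + X2" "rel_mset RR \<Gamma>1 X1" "rel_mset RR \<Gamma>2 X2"
    using rel_split by blast
  have "rel_mset RR (add_mset \<phi> \<Gamma>1) (add_mset r1 X1)" using b X' by (intro relI) simp_all
  then obtain Y1 where Y1: "rel_mset RR \<Delta>1 Y1" "CV (add_mset r1 X1) Y1" using SemD[OF assms(1)] by blast
  have "rel_mset RR (add_mset \<psi> \<Gamma>2) (add_mset r2 X2)" using b X' by (intro relI) simp_all
  then obtain Y2 where Y2: "rel_mset RR \<Delta>2 Y2" "CV (add_mset r2 X2) Y2" using SemD[OF assms(2)] by blast
  have "rel_mset RR (\<Delta>1 + \<Delta>2) (Y1 + Y2)" using rel_plus Y1(1) Y2(1) by blast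
  moreover have "CV X (Y1 + Y2)"
    using Y1(2) Y2(2) unfolding CV_def X X' b by auto
  ultimately show "\<exists>Y. rel_mset RR (\<Delta>1 + \<Delta>2) Y \<and> CV X Y" by blast
qed

lemma S_R_disj: assumes "Sem \<Gamma> (add_mset \<phi> (add_mset \<psi> \<Delta>))" shows "Sem \<Gamma> (add_mset (Disj \<phi> \<psi>) \<Delta>)"
proof (rule SemI)
  fix X assume "rel_mset RR \<Gamma> X"
  then obtain Y where Y: "rel_mset RR (add_mset \<phi> (add_mset \<psi> \<Delta>)) Y" "CV X Y" using SemD[OF assms] by blast
  from Y(1) obtain r1 Y' where Y': "Y = add_mset r1 Y'" "r1 \<in> Res \<phi>" "rel_mset RR (add_mset \<psi> \<Delta>) Y'" by (rule relE)
  from Y'(3) obtain r2 Z where Z: "Y' = add_mset r2 Z" "r2 \<in> Res \<psi>" "rel_mset RR \<Delta> Z" by (rule relE)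
  have "rel_mset RR (add_mset (Disj \<phi> \<psi>) \<Delta>) (add_mset (Disj r1 r2) Z)"
    using Z Y' by (intro relI) auto
  moreover have "CV X (add_mset (Disj r1 r2) Z)" using Y(2) unfolding CV_def Y' Z by auto
  ultimately show "\<exists>Y. rel_mset RR (add_mset (Disj \<phi> \<psi>) \<Delta>) Y \<and> CV X Y" by blast
qed

lemma S_L_idisj: assumes "Sem (add_mset (fill \<chi> \<phi>) \<Gamma>) \<Delta>" "Sem (add_mset (fill \<chi> \<psi>) \<Gamma>) \<Delta>"
  shows "Sem (add_mset (fill \<chi> (IDisj \<phi> \<psi>)) \<Gamma>) \<Delta>"
proof (rule SemI)
  fix X assume "rel_mset RR (add_mset (fill \<chi> (IDisj \<phi> \<psi>)) \<Gamma>) X"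
  then obtain r X' where X: "X = add_mset r X'" "r \<in> Res (fill \<chi> (IDisj \<phi> \<psi>))" "rel_mset RR \<Gamma> X'" by (rule relE)
  from X(2) have "r \<in> Res (fill \<chi> \<phi>) \<or> r \<in> Res (fill \<chi> \<psi>)" by (simp add: Res_fill)
  then show "\<exists>Y. rel_mset RR \<Delta> Y \<and> CV X Y"
  proof (elim disjE)
    assume "r \<in> Res (fill \<chi> \<phi>)"
    then have "rel_mset RR (add_mset (fill \<chi> \<phi>) \<Gamma>) X" unfolding X(1) using X(3) by (rule relI)
    then show ?thesis using SemD[OF assms(1)] by blast
  next
    assume "r \<in> Res (fill \<chi> \<psi>)"
    then have "rel_mset RR (add_mset (fill \<chi> \<psi>) \<Gamma>) X" unfolding X(1) using X(3) by (rule relI)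
    then show ?thesis using SemD[OF assms(2)] by blast
  qed
qed

lemma S_R_idisj: assumes "Sem \<Gamma> (add_mset \<phi>' \<Delta>)" "Res \<phi>' \<subseteq> Res \<phi>"
  shows "Sem \<Gamma> (add_mset \<phi> \<Delta>)"
proof (rule SemI)
  fix X assume "rel_mset RR \<Gamma> X"
  then obtain Y where Y: "rel_mset RR (add_mset \<phi>' \<Delta>) Y" "CV X Y" using SemD[OF assms(1)] by blast
  from Y(1) obtain r Y' where Y': "Y = add_mset r Y'" "r \<in> Res \<phi>'" "rel_mset RR \<Delta> Y'" by (rule relE)
  have "rel_mset RR (add_mset \<phi> \<Delta>) Y" unfolding Y'(1) using Y' assms(2) by (intro relI) auto
  then show "\<exists>Y. rel_mset RR (add_mset \<phi> \<Delta>) Y \<and> CV X Y" using Y(2) by blast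
qed

lemma S_LC: assumes "Sem (add_mset \<phi> (add_mset \<phi> \<Gamma>)) \<Delta>" shows "Sem (add_mset \<phi> \<Gamma>) \<Delta>"
proof (rule SemI)
  fix X assume "rel_mset RR (add_mset \<phi> \<Gamma>) X"
  then obtain r X' where X: "X = add_mset r X'" "r \<in> Res \<phi>" "rel_mset RR \<Gamma> X'" by (rule relE)
  then have "rel_mset RR (add_mset \<phi> (add_mset \<phi> \<Gamma>)) (add_mset r (add_mset r X'))"
    by (intro relI) simp_all
  then obtain Y where "rel_mset RR \<Delta> Y" "CV (add_mset r (add_mset r X')) Y" using SemD[OF assms] by blast
  then show "\<exists>Y. rel_mset RR \<Delta> Y \<and> CV X Y" unfolding CV_def X by auto
qed

lemma S_RC: assumes "classical a" "Sem \<Gamma> (add_mset a (add_mset a \<Delta>))" shows "Sem \<Gamma> (add_mset a \<Delta>)"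
proof (rule SemI)
  fix X assume "rel_mset RR \<Gamma> X"
  then obtain Y where Y: "rel_mset RR (add_mset a (add_mset a \<Delta>)) Y" "CV X Y" using SemD[OF assms(2)] by blast
  from Y(1) obtain r1 Y' where Y': "Y = add_mset r1 Y'" "r1 \<in> Res a" "rel_mset RR (add_mset a \<Delta>) Y'" by (rule relE)
  from Y'(3) obtain r2 Z where Z: "Y' = add_mset r2 Z" "r2 \<in> Res a" "rel_mset RR \<Delta> Z" by (rule relE)
  have r: "r1 = a" "r2 = a" using Y'(2) Z(2) Res_classical[OF assms(1)] by auto
  have "rel_mset RR (add_mset a \<Delta>) (add_mset a Z)"
    using Z(3) Res_classical[OF assms(1)] by (intro relI) auto
  moreover have "CV X (add_mset a Z)" using Y(2) unfolding CV_def Y' Z r by auto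
  ultimately show "\<exists>Y. rel_mset RR (add_mset a \<Delta>) Y \<and> CV X Y" by blast
qed

lemma GT'_Sem: "GT' \<Gamma> \<Delta> \<Longrightarrow> Sem \<Gamma> \<Delta>"
proof (induction rule: GT'.induct)
  case (R_idisjL \<Gamma> \<chi> \<phi> \<Delta> \<psi>)
  show ?case by (rule S_R_idisj[OF R_idisjL.IH]) (simp add: Res_fill)
next
  case (R_idisjR \<Gamma> \<chi> \<psi> \<Delta> \<phi>)
  show ?case by (rule S_R_idisj[OF R_idisjR.IH]) (simp add: Res_fill)
qed (auto intro: S_ax_atom S_ax_bot S_L_neg S_R_neg S_L_conj S_R_conj' S_L_disj' S_R_disj S_L_idisj S_LC S_RC)

section \<open>Part C: Sem implies GT\<close>

definition msz :: "fm multiset \<Rightarrow> nat" where "msz M = (\<Sum>x\<in>#M. size x)"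

lemma msz_add[simp]: "msz (add_mset x M) = size x + msz M"
  unfolding msz_def by simp

definition atomic :: "fm \<Rightarrow> bool" where "atomic x = ((\<exists>p. x = Atom p) \<or> x = Bot)"

lemma cl_complete:
  "\<forall>x\<in>#\<Gamma>. classical x \<Longrightarrow> \<forall>x\<in>#\<Delta>. classical x \<Longrightarrow> CV \<Gamma> \<Delta> \<Longrightarrow> GT \<Gamma> \<Delta>"
proof (induction "msz \<Gamma> + msz \<Delta>" arbitrary: \<Gamma> \<Delta> rule: less_induct)
  case less
  show ?case
  proof (cases "\<exists>x\<in>#\<Gamma>. \<not> atomic x")
    case True
    then obtain x where x: "x \<in># \<Gamma>" "\<not> atomic x" by blast
    define G where "G = \<Gamma> - {#x#}"
    have G: "\<Gamma> = add_mset x G" unfolding G_def using x(1) by simp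
    have cG: "\<forall>y\<in>#G. classical y" "classical x" using less.prems(1) G by auto
    show ?thesis
    proof (cases x)
      case (Neg a)
      have "GT G (add_mset a \<Delta>)"
        using less.hyps[of G "add_mset a \<Delta>"] less.prems cG unfolding G Neg CV_def by auto
      then show ?thesis unfolding G Neg using cG Neg by (intro GT.L_neg) auto
    next
      case (Conj a b)
      have "GT (add_mset a (add_mset b G)) \<Delta>"
        using less.hyps[of "add_mset a (add_mset b G)" \<Delta>] less.prems cG unfolding G Conj CV_def by auto
      then show ?thesis unfolding G Conj by (rule GT.L_conj)
    next
      case (Disj a b)
      have 1: "GT (add_mset a G) \<Delta>"
        using less.hyps[of "add_mset a G" \<Delta>] less.prems cG unfolding G Disj CV_def by auto
      have 2: "GT (add_mset b G) \<Delta>"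
        using less.hyps[of "add_mset b G" \<Delta>] less.prems cG unfolding G Disj CV_def by auto
      have "GT (add_mset (Disj a b) G) (\<Delta> + {#})"
        by (rule GT.L_disj) (use 1 2 less.prems(2) in auto)
      then show ?thesis unfolding G Disj by simp
    qed (use x cG in \<open>auto simp: atomic_def\<close>)
  next
    case F1: False
    show ?thesis
    proof (cases "\<exists>x\<in>#\<Delta>. \<not> atomic x")
      case True
      then obtain x where x: "x \<in># \<Delta>" "\<not> atomic x" by blast
      define D where "D = \<Delta> - {#x#}"
      have D: "\<Delta> = add_mset x D" unfolding D_def using x(1) by simp
      have cD: "\<forall>y\<in>#D. classical y" "classical x" using less.prems(2) D by auto
      show ?thesis
      proof (cases x)
        case (Neg a)
        have "GT (add_mset a \<Gamma>) D"
          using less.hyps[of "add_mset a \<Gamma>" D] less.prems cD unfolding D Neg CV_def by auto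
        then show ?thesis unfolding D Neg using cD Neg by (intro GT.R_neg) auto
      next
        case (Disj a b)
        have "GT \<Gamma> (add_mset a (add_mset b D))"
          using less.hyps[of \<Gamma> "add_mset a (add_mset b D)"] less.prems cD unfolding D Disj CV_def by auto
        then show ?thesis unfolding D Disj by (rule GT.R_disj)
      next
        case (Conj a b)
        have 1: "GT \<Gamma> (add_mset a D)"
          using less.hyps[of \<Gamma> "add_mset a D"] less.prems cD unfolding D Conj CV_def by auto
        have 2: "GT \<Gamma> (add_mset b D)"
          using less.hyps[of \<Gamma> "add_mset b D"] less.prems cD unfolding D Conj CV_def by auto
        have "GT \<Gamma> (add_mset (Conj a b) (D + {#}))"
          by (rule GT.R_conj) (use 1 2 cD in auto)
        then show ?thesis unfolding D Conj by simp
      qed (use x cD in \<open>auto simp: atomic_def\<close>)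
    next
      case F2: False
      show ?thesis
      proof (cases "Bot \<in># \<Gamma>")
        case True
        then have "\<Gamma> = add_mset Bot (\<Gamma> - {#Bot#})" by simp
        then show ?thesis by (metis GT.ax_bot)
      next
        case nB: False
        show ?thesis
        proof (cases "\<exists>p. Atom p \<in># \<Gamma> \<and> Atom p \<in># \<Delta>")
          case True
          then obtain p where p: "Atom p \<in># \<Gamma>" "Atom p \<in># \<Delta>" by blast
          then have "\<Gamma> = add_mset (Atom p) (\<Gamma> - {#Atom p#})" "\<Delta> = add_mset (Atom p) (\<Delta> - {#Atom p#})" by simp_all
          then show ?thesis by (metis GT.ax_atom)
        next
          case False
          define v where "v = (\<lambda>p. Atom p \<in># \<Gamma>)"
          have "\<forall>x\<in>#\<Gamma>. ev v x" using F1 nB unfolding atomic_def v_def by auto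
          then obtain y where y: "y \<in># \<Delta>" "ev v y" using less.prems(3) unfolding CV_def by blast
          then show ?thesis using F2 False unfolding atomic_def v_def by auto
        qed
      qed
    qed
  qed
qed

fun ccomp :: "ctx \<Rightarrow> ctx \<Rightarrow> ctx" where
  "ccomp Hole d = d"
| "ccomp (CConjL c b) d = CConjL (ccomp c d) b"
| "ccomp (CConjR a c) d = CConjR a (ccomp c d)"
| "ccomp (CDisjL c b) d = CDisjL (ccomp c d) b"
| "ccomp (CDisjR a c) d = CDisjR a (ccomp c d)"
| "ccomp (CIDisjL c b) d = CIDisjL (ccomp c d) b"
| "ccomp (CIDisjR a c) d = CIDisjR a (ccomp c d)"

lemma fill_ccomp[simp]: "fill (ccomp c d) e = fill c (fill d e)"
  by (induction c) auto

lemma lift_R: "r \<in> Res x \<Longrightarrow> GT \<Gamma> (add_mset (fill \<chi> r) \<Delta>) \<Longrightarrow> GT \<Gamma> (add_mset (fill \<chi> x) \<Delta>)"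
proof (induction x arbitrary: \<chi> r)
  case (Conj a b)
  then obtain r1 r2 where r: "r = Conj r1 r2" "r1 \<in> Res a" "r2 \<in> Res b" by auto
  have "GT \<Gamma> (add_mset (fill (ccomp \<chi> (CConjL Hole r2)) r1) \<Delta>)" using Conj.prems(2) r by simp
  then have "GT \<Gamma> (add_mset (fill (ccomp \<chi> (CConjL Hole r2)) a) \<Delta>)" using Conj.IH(1) r(2) by blast
  then have "GT \<Gamma> (add_mset (fill (ccomp \<chi> (CConjR a Hole)) r2) \<Delta>)" by simp
  then have "GT \<Gamma> (add_mset (fill (ccomp \<chi> (CConjR a Hole)) b) \<Delta>)" using Conj.IH(2) r(3) by blast
  then show ?case by simp
next
  case (Disj a b)
  then obtain r1 r2 where r: "r = Disj r1 r2" "r1 \<in> Res a" "r2 \<in> Res b" by auto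
  have "GT \<Gamma> (add_mset (fill (ccomp \<chi> (CDisjL Hole r2)) r1) \<Delta>)" using Disj.prems(2) r by simp
  then have "GT \<Gamma> (add_mset (fill (ccomp \<chi> (CDisjL Hole r2)) a) \<Delta>)" using Disj.IH(1) r(2) by blast
  then have "GT \<Gamma> (add_mset (fill (ccomp \<chi> (CDisjR a Hole)) r2) \<Delta>)" by simp
  then have "GT \<Gamma> (add_mset (fill (ccomp \<chi> (CDisjR a Hole)) b) \<Delta>)" using Disj.IH(2) r(3) by blast
  then show ?case by simp
next
  case (IDisj a b)
  then consider "r \<in> Res a" | "r \<in> Res b" by auto
  then show ?case
  proof cases
    case 1
    then have "GT \<Gamma> (add_mset (fill \<chi> a) \<Delta>)" using IDisj.IH(1) IDisj.prems(2) by blast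
    then show ?thesis by (rule GT.R_idisjL)
  next
    case 2
    then have "GT \<Gamma> (add_mset (fill \<chi> b) \<Delta>)" using IDisj.IH(2) IDisj.prems(2) by blast
    then show ?thesis by (rule GT.R_idisjR)
  qed
qed auto

lemma lift_L: "(\<forall>r\<in>Res x. GT (add_mset (fill \<chi> r) \<Gamma>) \<Delta>) \<Longrightarrow> GT (add_mset (fill \<chi> x) \<Gamma>) \<Delta>"
proof (induction x arbitrary: \<chi>)
  case (Conj a b)
  have "GT (add_mset (fill (ccomp \<chi> (CConjR a Hole)) r2) \<Gamma>) \<Delta>" if r2: "r2 \<in> Res b" for r2
  proof -
    have "GT (add_mset (fill (ccomp \<chi> (CConjL Hole r2)) r1) \<Gamma>) \<Delta>" if "r1 \<in> Res a" for r1
      using Conj.prems that r2 by auto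
    then have "GT (add_mset (fill (ccomp \<chi> (CConjL Hole r2)) a) \<Gamma>) \<Delta>" using Conj.IH(1) by blast
    then show ?thesis by simp
  qed
  then have "GT (add_mset (fill (ccomp \<chi> (CConjR a Hole)) b) \<Gamma>) \<Delta>" using Conj.IH(2) by blast
  then show ?case by simp
next
  case (Disj a b)
  have "GT (add_mset (fill (ccomp \<chi> (CDisjR a Hole)) r2) \<Gamma>) \<Delta>" if r2: "r2 \<in> Res b" for r2
  proof -
    have "GT (add_mset (fill (ccomp \<chi> (CDisjL Hole r2)) r1) \<Gamma>) \<Delta>" if "r1 \<in> Res a" for r1
      using Disj.prems that r2 by auto
    then have "GT (add_mset (fill (ccomp \<chi> (CDisjL Hole r2)) a) \<Gamma>) \<Delta>" using Disj.IH(1) by blast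
    then show ?thesis by simp
  qed
  then have "GT (add_mset (fill (ccomp \<chi> (CDisjR a Hole)) b) \<Gamma>) \<Delta>" using Disj.IH(2) by blast
  then show ?case by simp
next
  case (IDisj a b)
  have 1: "GT (add_mset (fill \<chi> a) \<Gamma>) \<Delta>" using IDisj.IH(1) IDisj.prems by auto
  have 2: "GT (add_mset (fill \<chi> b) \<Gamma>) \<Delta>" using IDisj.IH(2) IDisj.prems by auto
  show ?case using 1 2 by (rule GT.L_idisj)
qed auto

lemma liftm_R: "rel_mset RR \<Delta> Y \<Longrightarrow> GT \<Gamma> (Y + \<Sigma>) \<Longrightarrow> GT \<Gamma> (\<Delta> + \<Sigma>)"
proof (induction \<Delta> arbitrary: Y \<Sigma>)
  case empty
  then show ?case by simp
next
  case (add x \<Delta>)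
  from add.prems(1) obtain b Y1 where Y: "Y = add_mset b Y1" "b \<in> Res x" "rel_mset RR \<Delta> Y1" by (rule relE)
  have "GT \<Gamma> (Y1 + add_mset b \<Sigma>)" using add.prems(2) Y(1) by simp
  then have "GT \<Gamma> (\<Delta> + add_mset b \<Sigma>)" using add.IH Y(3) by blast
  then have "GT \<Gamma> (add_mset (fill Hole b) (\<Delta> + \<Sigma>))" by simp
  then have "GT \<Gamma> (add_mset (fill Hole x) (\<Delta> + \<Sigma>))" by (rule lift_R[OF Y(2)])
  then show ?case by simp
qed

lemma liftm_L: "(\<And>X. rel_mset RR \<Gamma> X \<Longrightarrow> GT (X + \<Sigma>) \<Delta>) \<Longrightarrow> GT (\<Gamma> + \<Sigma>) \<Delta>"
proof (induction \<Gamma> arbitrary: \<Sigma>)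
  case empty
  have "rel_mset RR {#} {#}" by (rule rel_mset_Zero)
  then have "GT ({#} + \<Sigma>) \<Delta>" by (rule empty.prems)
  then show ?case by simp
next
  case (add x \<Gamma>)
  have "GT (\<Gamma> + add_mset r \<Sigma>) \<Delta>" if r: "r \<in> Res x" for r
  proof (rule add.IH)
    fix X assume "rel_mset RR \<Gamma> X"
    then have "rel_mset RR (add_mset x \<Gamma>) (add_mset r X)" using r by (intro relI)
    then have "GT (add_mset r X + \<Sigma>) \<Delta>" by (rule add.prems)
    then show "GT (X + add_mset r \<Sigma>) \<Delta>" by simp
  qed
  then have "\<forall>r\<in>Res x. GT (add_mset (fill Hole r) (\<Gamma> + \<Sigma>)) \<Delta>" by simp
  then have "GT (add_mset (fill Hole x) (\<Gamma> + \<Sigma>)) \<Delta>" by (rule lift_L)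
  then show ?case by simp
qed

lemma rel_classical: "rel_mset RR \<Gamma> X \<Longrightarrow> \<forall>x\<in>#\<Gamma>. wf_fm x \<Longrightarrow> \<forall>r\<in>#X. classical r"
proof (induction \<Gamma> arbitrary: X)
  case empty
  then have "X = {#}" by simp
  then show ?case by simp
next
  case (add x \<Gamma>)
  from add.prems(1) obtain b X1 where "X = add_mset b X1" "b \<in> Res x" "rel_mset RR \<Gamma> X1" by (rule relE)
  moreover have "wf_fm x" "\<forall>x\<in>#\<Gamma>. wf_fm x" using add.prems(2) by simp_all
  moreover have "classical b" by (rule Res_wf[OF calculation(4) calculation(2)])
  moreover have "\<forall>r\<in>#X1. classical r" by (rule add.IH[OF calculation(3) calculation(5)])
  ultimately show ?case by simp
qed

lemma Sem_GT: assumes "\<forall>x\<in>#\<Gamma>. wf_fm x" "\<forall>x\<in>#\<Delta>. wf_fm x" "Sem \<Gamma> \<Delta>" shows "GT \<Gamma> \<Delta>"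
proof -
  have "GT (X + {#}) \<Delta>" if X: "rel_mset RR \<Gamma> X" for X
  proof -
    obtain Y where Y: "rel_mset RR \<Delta> Y" "CV X Y" using SemD[OF assms(3) X] by blast
    have "GT X Y" by (rule cl_complete[OF rel_classical[OF X assms(1)] rel_classical[OF Y(1) assms(2)] Y(2)])
    then have "GT X (\<Delta> + {#})" using liftm_R[OF Y(1), of X "{#}"] by simp
    then show ?thesis by simp
  qed
  then have "GT (\<Gamma> + {#}) \<Delta>" by (rule liftm_L)
  then show ?thesis by simp
qed

theorem proposition9p2:
  fixes \<Gamma> \<Delta> :: "fm multiset"
  assumes "\<forall>x\<in>#\<Gamma>. wf_fm x" and "\<forall>x\<in>#\<Delta>. wf_fm x"
  shows "GT \<Gamma> \<Delta> \<longleftrightarrow> GT' \<Gamma> \<Delta>"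
proof
  assume "GT \<Gamma> \<Delta>"
  then show "GT' \<Gamma> \<Delta>" by (rule GT_GT')
next
  assume "GT' \<Gamma> \<Delta>"
  then have "Sem \<Gamma> \<Delta>" by (rule GT'_Sem)
  then show "GT \<Gamma> \<Delta>" by (rule Sem_GT[OF assms])
qed

end
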